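(* Let $k\ge1$, $A,B_1,\dots,B_k,C_1,\dots,C_k\in\mathbb{C}^{r\times r}$ with $C_j+mI$ invertible for all $m\ge0$ and all $j$, and $C_iC_j=C_jC_i$ for all $i,j$. Fix $i$ and $n\ge1$, and suppose $B_i+mI$ is invertible for all $m\ge0$. Then $$F_{\mathcal A}[B_i+nI]=\sum_{n_1=0}^n\binom{n}{n_1}(A)_{n_1}x_i^{n_1}\,F_{\mathcal A}[A+n_1I,\,B_i+n_1I,\,C_i+n_1I]\,(C_i)^{-1}_{n_1}.$$ Furthermore, if $B_i-n_1I$ is invertible for $0\le n_1\le n$, then $$F_{\mathcal A}[B_i-nI]=\sum_{n_1=0}^n\binom{n}{n_1}(A)_{n_1}(-x_i)^{n_1}\,F_{\mathcal A}[A+n_1I,\,C_i+n_1I]\,(C_i)^{-1}_{n_1}.$$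
   Context: For $M\in\mathbb{C}^{r\times r}$: $(M)_0=I$, $(M)_m=M(M+I)\cdots(M+(m-1)I)$, $(M)^{-1}_m=((M)_m)^{-1}$. $$F_{\mathcal A}=F_{\mathcal A}[A,B_1,\dots,B_k;C_1,\dots,C_k;x_1,\dots,x_k]=\sum_{m_1,\dots,m_k\ge0}(A)_{m_1+\cdots+m_k}\prod_{j=1}^k(B_j)_{m_j}\prod_{j=1}^k(C_j)^{-1}_{m_j}\prod_{j=1}^k\frac{x_j^{m_j}}{m_j!},$$ $x_j$ scalar variables, matrix products in order of increasing index; identities are of formal power series in the $x_j$. $F_{\mathcal A}[\dots]$ lists only the shifted parameters, all others unchanged (in the second formula $B_i$ is unshifted). *)

theory Defs
  imports "HOL-Analysis.Analysis"
begin

type_synonym 'n cmat = "complex^'n^'n"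

fun mpoch :: "'n::finite cmat \<Rightarrow> nat \<Rightarrow> 'n cmat" where
  "mpoch M 0 = mat 1"
| "mpoch M (Suc m) = mpoch M m ** (M + mat (of_nat m))"

definition mpoch_inv :: "'n::finite cmat \<Rightarrow> nat \<Rightarrow> 'n cmat" where
  "mpoch_inv M m = matrix_inv (mpoch M m)"

definition oprod :: "(nat \<Rightarrow> 'n::finite cmat) \<Rightarrow> nat list \<Rightarrow> 'n cmat" where
  "oprod f js = foldr (\<lambda>j acc. f j ** acc) js (mat 1)"

text \<open>A formal power series in the scalar variables x_1..x_k with matrix coefficients is
  represented by its coefficient function on multi-indices m :: nat \<Rightarrow> nat
  (m j = exponent of x_j; only indices j in {1..k} are relevant).\<close>
type_synonym 'n mfps = "(nat \<Rightarrow> nat) \<Rightarrow> 'n cmat"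

definition FA :: "nat \<Rightarrow> 'n::finite cmat \<Rightarrow> (nat \<Rightarrow> 'n cmat) \<Rightarrow> (nat \<Rightarrow> 'n cmat) \<Rightarrow> 'n mfps" where
  "FA k A B C = (\<lambda>m. (1 / real (\<Prod>j\<in>{1..k}. fact (m j))) *\<^sub>R
      (mpoch A (\<Sum>j\<in>{1..k}. m j)
       ** oprod (\<lambda>j. mpoch (B j) (m j)) [1..<k+1]
       ** oprod (\<lambda>j. mpoch_inv (C j) (m j)) [1..<k+1]))"

definition xmul :: "nat \<Rightarrow> nat \<Rightarrow> 'n::finite mfps \<Rightarrow> 'n mfps" where
  "xmul i p S = (\<lambda>m. if p \<le> m i then S (m(i := m i - p)) else 0)"

end

theory Submission imports Defs begin

type_synonym 'n M = "complex^'n^'n"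

lemma mm_scaleR_left: "((r::real) *\<^sub>R (X::'n::finite M)) ** Y = r *\<^sub>R (X ** Y)"
  by (simp add: matrix_matrix_mult_def vec_eq_iff scaleR_sum_right)
lemma mm_scaleR_right: "(X::'n::finite M) ** ((r::real) *\<^sub>R Y) = r *\<^sub>R (X ** Y)"
  by (simp add: matrix_matrix_mult_def vec_eq_iff scaleR_sum_right)
lemma mm_add_rdistrib: "((X::'n::finite M) + Y) ** Z = X ** Z + Y ** Z"
  by (simp add: matrix_matrix_mult_def vec_eq_iff sum.distrib distrib_right)
lemma mm_diff_ldistrib: "(X::'n::finite M) ** (Y - Z) = X ** Y - X ** Z"
  by (simp add: matrix_matrix_mult_def vec_eq_iff sum_subtractf right_diff_distrib)
lemma mm_diff_rdistrib: "((X::'n::finite M) - Y) ** Z = X ** Z - Y ** Z"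
  by (simp add: matrix_matrix_mult_def vec_eq_iff sum_subtractf left_diff_distrib)
lemma mm_sum_left: "(\<Sum>j\<in>S. (f j::'n::finite M)) ** (Z::'n::finite M) = (\<Sum>j\<in>S. f j ** Z)"
  by (induction S rule: infinite_finite_induct) (auto simp: mm_add_rdistrib)
lemma mm_sum_right: "(Z::'n::finite M) ** (\<Sum>j\<in>S. f j) = (\<Sum>j\<in>S. Z ** f j)"
  by (induction S rule: infinite_finite_induct) (auto simp: matrix_add_ldistrib)
lemma mat_add: "mat (a + b) = (mat a + mat b :: 'n::finite M)"
  by (simp add: mat_def vec_eq_iff)
lemma mat_diff: "mat (a - b) = (mat a - mat b :: 'n::finite M)"
  by (simp add: mat_def vec_eq_iff)
lemma mat_of_nat: "(mat (of_nat m) :: 'n::finite M) = real m *\<^sub>R mat 1"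
  apply (simp add: mat_def vec_eq_iff) by (simp flip: of_real_def)
lemma mat_comm: "(X::'n::finite M) ** mat c = mat c ** X"
  by (simp add: matrix_matrix_mult_def mat_def vec_eq_iff if_distrib if_distribR sum.delta' mult.commute cong: if_cong)

lemma mat_nat_add: "(mat (of_nat a) :: 'n::finite M) + mat (of_nat b) = mat (of_nat (a + b))"
  by (simp add: mat_add)

lemma comm_mpoch:
  assumes "Y ** M = M ** (Y::'n::finite M)"
  shows "Y ** mpoch M m = mpoch M m ** Y"
proof (induction m)
  case 0 then show ?case by simp
next
  case (Suc m)
  have "Y ** (M + mat (of_nat m)) = (M + mat (of_nat m)) ** Y"
    by (simp add: matrix_add_ldistrib mm_add_rdistrib assms mat_comm)
  then show ?case using Suc
    by (metis matrix_mul_assoc mpoch.simps(2))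
qed

lemma mpoch_front: "mpoch (X::'n::finite M) (Suc m) = X ** mpoch (X + mat 1) m"
proof (induction m)
  case 0 then show ?case by simp
next
  case (Suc m)
  have e: "X + mat 1 + mat (of_nat m) = X + mat (of_nat (Suc m))"
    using mat_nat_add[of 1 m] by (simp add: add.assoc)
  have "mpoch X (Suc (Suc m)) = mpoch X (Suc m) ** (X + mat (of_nat (Suc m)))" by simp
  also have "\<dots> = X ** mpoch (X + mat 1) (Suc m)"
    using Suc by (simp add: matrix_mul_assoc mat_add add.assoc)
  finally show ?case .
qed

lemma mpoch_add: "mpoch (A::'n::finite M) a ** mpoch (A + mat (of_nat a)) s = mpoch A (a + s)"
proof (induction s)
  case 0 then show ?case by simp
next
  case (Suc s)
  have e: "A + mat (of_nat a) + mat (of_nat s) = A + mat (of_nat (a + s))"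
    using mat_nat_add[of a s] by (simp add: add.assoc)
  show ?case using Suc by (simp add: matrix_mul_assoc add.assoc mat_add)
qed

lemma mpoch_L1: "mpoch ((X::'n::finite M) + mat 1) m = mpoch X m + real m *\<^sub>R mpoch (X + mat 1) (m - 1)"
proof (cases m)
  case 0 then show ?thesis by simp
next
  case (Suc m')
  let ?P = "mpoch (X + mat 1) m'"
  have c: "?P ** X = X ** ?P"
    by (rule comm_mpoch[symmetric]) (simp add: matrix_add_ldistrib mm_add_rdistrib mat_comm)
  have e: "X + mat 1 + mat (of_nat m') = X + real (Suc m') *\<^sub>R mat 1"
    by (simp only: mat_of_nat[symmetric]) (simp add: mat_add add.assoc)
  have "mpoch (X + mat 1) m = ?P ** (X + mat 1 + mat (of_nat m'))"
    using Suc by simp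
  also have "\<dots> = ?P ** (X + real (Suc m') *\<^sub>R mat 1)" by (simp only: e)
  also have "\<dots> = X ** ?P + real (Suc m') *\<^sub>R ?P"
    by (simp add: matrix_add_ldistrib mm_scaleR_right c)
  also have "\<dots> = mpoch X m + real m *\<^sub>R mpoch (X + mat 1) (m - 1)"
    by (simp only: Suc mpoch_front) simp
  finally show ?thesis .
qed

lemma invertible_mpoch:
  assumes "\<And>l. invertible ((C::'n::finite M) + mat (of_nat l))"
  shows "invertible (mpoch C m)"
proof (induction m)
  case 0 then show ?case by (auto simp: invertible_def)
next
  case (Suc m) show ?case by (simp only: mpoch.simps) (rule invertible_mult[OF Suc.IH assms])
qed

lemma pascal_sum:
  fixes f :: "nat \<Rightarrow> 'a::real_vector"
  shows "(\<Sum>j\<le>Suc n. real (Suc n choose j) *\<^sub>R f j)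
       = (\<Sum>j\<le>n. real (n choose j) *\<^sub>R f j) + (\<Sum>j\<le>n. real (n choose j) *\<^sub>R f (Suc j))"
proof -
  have a: "(\<Sum>j\<le>Suc n. real (n choose j) *\<^sub>R f j) = (\<Sum>j\<le>n. real (n choose j) *\<^sub>R f j)"
    by (simp add: sum.atMost_Suc binomial_eq_0)
  have b: "(\<Sum>j\<le>Suc n. real (n choose j) *\<^sub>R f j) = f 0 + (\<Sum>j\<le>n. real (n choose Suc j) *\<^sub>R f (Suc j))"
    by (simp only: sum.atMost_Suc_shift) simp
  have "(\<Sum>j\<le>Suc n. real (Suc n choose j) *\<^sub>R f j)
     = f 0 + (\<Sum>j\<le>n. real (n choose Suc j) *\<^sub>R f (Suc j)) + (\<Sum>j\<le>n. real (n choose j) *\<^sub>R f (Suc j))"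
    by (simp only: sum.atMost_Suc_shift binomial_Suc_Suc of_nat_add scaleR_left_distrib sum.distrib) (simp add: add_ac)
  then show ?thesis by (simp only: b[symmetric] a)
qed

lemma coef_shift: "real (m choose Suc j) * fact (Suc j) = real m * (real ((m - 1) choose j) * fact j)"
proof (cases m)
  case 0 then show ?thesis by simp
next
  case (Suc m')
  have "(Suc m' choose Suc j) * Suc j = Suc m' * (m' choose j)"
    by (metis Suc_times_binomial_eq)
  then have h: "real (Suc m' choose Suc j) * real (Suc j) = real (Suc m') * real (m' choose j)"
    by (metis of_nat_mult)
  have "real (Suc m' choose Suc j) * fact (Suc j) = (real (Suc m' choose Suc j) * real (Suc j)) * fact j"
    by (simp only: fact_Suc of_nat_Suc mult.assoc)
  also have "\<dots> = real (Suc m') * (real (m' choose j) * fact j)" by (simp only: h mult.assoc)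
  finally show ?thesis using Suc by simp
qed

lemma I1: "mpoch ((M::'n::finite M) + mat (of_nat n)) m =
  (\<Sum>j\<le>n. (real (n choose j) * (real (m choose j) * fact j)) *\<^sub>R mpoch (M + mat (of_nat j)) (m - j))"
proof (induction n arbitrary: M m)
  case 0 then show ?case by simp
next
  case (Suc n)
  define f where "f = (\<lambda>j. (real (m choose j) * fact j) *\<^sub>R mpoch (M + mat (of_nat j)) (m - j))"
  have e1: "M + mat (of_nat (Suc n)) = (M + mat (of_nat n)) + mat 1" by (simp add: mat_add add_ac)
  have e2: "(M + mat (of_nat n)) + mat 1 = (M + mat 1) + mat (of_nat n)" by (simp add: add_ac)
  have e3: "\<And>j. (M + mat 1) + mat (of_nat j) = M + mat (of_nat (Suc j))" by (simp add: mat_add add_ac)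
  have "mpoch (M + mat (of_nat (Suc n))) m = mpoch (M + mat (of_nat n)) m + real m *\<^sub>R mpoch ((M + mat 1) + mat (of_nat n)) (m - 1)"
    unfolding e1 by (subst mpoch_L1) (simp only: e2)
  also have "\<dots> = (\<Sum>j\<le>n. real (n choose j) *\<^sub>R f j) + (\<Sum>j\<le>n. real (n choose j) *\<^sub>R f (Suc j))"
  proof -
    have x: "real m *\<^sub>R mpoch ((M + mat 1) + mat (of_nat n)) (m - 1) = (\<Sum>j\<le>n. real (n choose j) *\<^sub>R f (Suc j))"
      unfolding Suc.IH[of "M + mat 1" "m - 1"] unfolding f_def scaleR_sum_right e3
    proof (intro sum.cong refl)
      fix j
      show "real m *\<^sub>R ((real (n choose j) * (real (m - 1 choose j) * fact j)) *\<^sub>R mpoch (M + mat (of_nat (Suc j))) (m - 1 - j)) =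
        real (n choose j) *\<^sub>R ((real (m choose Suc j) * fact (Suc j)) *\<^sub>R mpoch (M + mat (of_nat (Suc j))) (m - Suc j))"
        by (simp only: scaleR_scaleR coef_shift diff_Suc_eq_diff_pred mult.left_commute)
    qed
    show ?thesis unfolding x Suc.IH[of M m] f_def by (simp only: scaleR_scaleR)
  qed
  also have "\<dots> = (\<Sum>j\<le>Suc n. real (Suc n choose j) *\<^sub>R f j)" by (simp only: pascal_sum)
  finally show ?case by (simp only: f_def scaleR_scaleR)
qed

lemma I2: "mpoch ((M::'n::finite M) - mat (of_nat n)) m =
  (\<Sum>j\<le>n. ((-1) ^ j * (real (n choose j) * (real (m choose j) * fact j))) *\<^sub>R mpoch M (m - j))"
proof (induction n arbitrary: m)
  case 0 then show ?case by simp
next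
  case (Suc n)
  define f where "f = (\<lambda>j. ((-1) ^ j * (real (m choose j) * fact j)) *\<^sub>R mpoch M (m - j))"
  have e1: "(M - mat (of_nat (Suc n))) + mat 1 = M - mat (of_nat n)" by (simp add: mat_add)
  have h: "mpoch (M - mat (of_nat n)) m = mpoch (M - mat (of_nat (Suc n))) m + real m *\<^sub>R mpoch (M - mat (of_nat n)) (m - 1)"
    using mpoch_L1[of "M - mat (of_nat (Suc n))" m] by (simp only: e1)
  have "mpoch (M - mat (of_nat (Suc n))) m = mpoch (M - mat (of_nat n)) m - real m *\<^sub>R mpoch (M - mat (of_nat n)) (m - 1)"
    by (simp only: h) simp
  also have "\<dots> = (\<Sum>j\<le>n. real (n choose j) *\<^sub>R f j) + (\<Sum>j\<le>n. real (n choose j) *\<^sub>R f (Suc j))"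
  proof -
    have x: "- (real m *\<^sub>R mpoch (M - mat (of_nat n)) (m - 1)) = (\<Sum>j\<le>n. real (n choose j) *\<^sub>R f (Suc j))"
      unfolding Suc.IH[of "m - 1"] unfolding f_def scaleR_sum_right sum_negf[symmetric]
    proof (intro sum.cong refl)
      fix j
      show "- (real m *\<^sub>R (((-1) ^ j * (real (n choose j) * (real (m - 1 choose j) * fact j))) *\<^sub>R mpoch M (m - 1 - j))) =
        real (n choose j) *\<^sub>R (((-1) ^ Suc j * (real (m choose Suc j) * fact (Suc j))) *\<^sub>R mpoch M (m - Suc j))"
        unfolding scaleR_scaleR coef_shift diff_Suc_eq_diff_pred scaleR_minus_left[symmetric]
        by (simp add: algebra_simps)
    qed
    have "mpoch (M - mat (of_nat n)) m - real m *\<^sub>R mpoch (M - mat (of_nat n)) (m - 1)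
      = mpoch (M - mat (of_nat n)) m + - (real m *\<^sub>R mpoch (M - mat (of_nat n)) (m - 1))"
      by (rule diff_conv_add_uminus)
    also have "\<dots> = (\<Sum>j\<le>n. real (n choose j) *\<^sub>R f j) + (\<Sum>j\<le>n. real (n choose j) *\<^sub>R f (Suc j))"
      unfolding x unfolding Suc.IH[of m] f_def
      by (simp only: scaleR_scaleR mult.left_commute)
    finally show ?thesis .
  qed
  also have "\<dots> = (\<Sum>j\<le>Suc n. real (Suc n choose j) *\<^sub>R f j)" by (simp only: pascal_sum)
  finally show ?case by (simp only: f_def scaleR_scaleR mult.left_commute)
qed

lemma oprod_Nil[simp]: "oprod f [] = mat 1" by (simp add: oprod_def)
lemma oprod_Cons: "oprod f (x # ys) = f x ** oprod f ys" by (simp add: oprod_def)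
lemma oprod_append: "oprod f (xs @ ys) = oprod f xs ** oprod f ys"
  by (induction xs) (simp_all add: oprod_Cons matrix_mul_assoc)
lemma oprod_cong: "(\<And>j. j \<in> set xs \<Longrightarrow> f j = g j) \<Longrightarrow> oprod f xs = oprod g xs"
  by (induction xs) (simp_all add: oprod_Cons)
lemma oprod_comm: "(\<And>j. j \<in> set ys \<Longrightarrow> X ** f j = f j ** X) \<Longrightarrow> X ** oprod f ys = oprod f ys ** (X::'n::finite M)"
proof (induction ys)
  case Nil then show ?case by simp
next
  case (Cons y ys)
  have "X ** (f y ** oprod f ys) = (f y ** X) ** oprod f ys" using Cons.prems by (simp add: matrix_mul_assoc)
  also have "\<dots> = f y ** oprod f ys ** X" using Cons by (simp add: matrix_mul_assoc[symmetric])
  finally show ?case by (simp add: oprod_Cons)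
qed
lemma upt_split: "1 \<le> i \<Longrightarrow> i \<le> k \<Longrightarrow> [1..<k+1] = [1..<i] @ i # [Suc i..<k+1]"
proof -
  assume a: "1 \<le> i" "i \<le> k"
  have "[1..<i + (k + 1 - i)] = [1..<i] @ [i..<i + (k + 1 - i)]" using a by (intro upt_add_eq_append)
  moreover have "i + (k + 1 - i) = k + 1" using a by simp
  moreover have "[i..<k+1] = i # [Suc i..<k+1]" using a by (intro upt_conv_Cons) simp
  ultimately show ?thesis by simp
qed

lemma matrix_inv_props:
  assumes "invertible (X::'n::finite M)"
  shows "X ** matrix_inv X = mat 1" "matrix_inv X ** X = mat 1"
proof -
  have "\<exists>A'. X ** A' = mat 1 \<and> A' ** X = mat 1" using assms invertible_def by blast
  then have "X ** matrix_inv X = mat 1 \<and> matrix_inv X ** X = mat 1"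
    unfolding matrix_inv_def by (rule someI_ex)
  then show "X ** matrix_inv X = mat 1" "matrix_inv X ** X = mat 1" by auto
qed

lemma inv_unique:
  assumes "invertible (X::'n::finite M)" "Z ** X = mat 1"
  shows "matrix_inv X = Z"
proof -
  have "Z = Z ** (X ** matrix_inv X)" using matrix_inv_props(1)[OF assms(1)] by simp
  also have "\<dots> = matrix_inv X" by (simp add: matrix_mul_assoc assms(2))
  finally show ?thesis by simp
qed

lemma matrix_inv_mult':
  assumes "invertible (X::'n::finite M)" "invertible (Y::'n M)"
  shows "matrix_inv (X ** Y) = matrix_inv Y ** matrix_inv X"
proof (rule inv_unique)
  show "invertible (X ** Y)" using assms invertible_mult by blast
  have "matrix_inv Y ** matrix_inv X ** (X ** Y) = matrix_inv Y ** (matrix_inv X ** X) ** Y"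
    by (simp add: matrix_mul_assoc)
  also have "\<dots> = mat 1" using matrix_inv_props[OF assms(1)] matrix_inv_props[OF assms(2)] by simp
  finally show "matrix_inv Y ** matrix_inv X ** (X ** Y) = mat 1" .
qed

lemma inv_comm:
  assumes "invertible (X::'n::finite M)" "invertible (Y::'n M)" "X ** Y = Y ** X"
  shows "matrix_inv X ** matrix_inv Y = matrix_inv Y ** matrix_inv X"
  using matrix_inv_mult'[OF assms(1,2)] matrix_inv_mult'[OF assms(2,1)] assms(3) by simp

lemma mpoch_comm2:
  assumes "(X::'n::finite M) ** Y = Y ** X"
  shows "mpoch X a ** mpoch Y b = mpoch Y b ** mpoch X a"
proof -
  have "X ** mpoch Y b = mpoch Y b ** X" by (rule comm_mpoch) (use assms in simp)
  then have "mpoch Y b ** mpoch X a = mpoch X a ** mpoch Y b" by (intro comm_mpoch) simp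
  then show ?thesis by simp
qed

lemma term_eq:
  fixes k i j :: nat and A X :: "'n::finite M" and B C :: "nat \<Rightarrow> 'n M" and m :: "nat \<Rightarrow> nat"
  assumes hi: "i \<in> {1..k}"
    and hC: "\<And>l q. l \<in> {1..k} \<Longrightarrow> invertible (C l + mat (of_nat q))"
    and hCC: "\<And>l1 l2. l1 \<in> {1..k} \<Longrightarrow> l2 \<in> {1..k} \<Longrightarrow> C l1 ** C l2 = C l2 ** C l1"
  shows "mpoch A j ** xmul i j (FA k (A + mat (of_nat j)) (B(i := X)) (C(i := C i + mat (of_nat j)))) m ** mpoch_inv (C i) j
   = ((real (m i choose j) * fact j) / real (\<Prod>l\<in>{1..k}. fact (m l))) *\<^sub>R
     (mpoch A (\<Sum>l\<in>{1..k}. m l) ** oprod (\<lambda>l. mpoch (B l) (m l)) [1..<i] ** mpoch X (m i - j)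
      ** oprod (\<lambda>l. mpoch (B l) (m l)) [Suc i..<k+1]
      ** oprod (\<lambda>l. mpoch_inv (C l) (m l)) [1..<i] ** mpoch_inv (C i) (m i)
      ** oprod (\<lambda>l. mpoch_inv (C l) (m l)) [Suc i..<k+1])"
proof (cases "j \<le> m i")
  case False
  then have "m i choose j = 0" by simp
  moreover have "xmul i j (FA k (A + mat (of_nat j)) (B(i := X)) (C(i := C i + mat (of_nat j)))) m = 0"
    using False by (simp add: xmul_def)
  ultimately show ?thesis by simp
next
  case True
  define m' where "m' = m(i := m i - j)"
  define fB where "fB = (\<lambda>l. mpoch (B l) (m l))"
  define g where "g = (\<lambda>l. mpoch_inv (C l) (m l))"
  define R0 where "R0 = {1..k} - {i}"
  have fin: "finite {1..k}" by simp
  have hi1: "1 \<le> i" "i \<le> k" using hi by auto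
  have xm: "xmul i j S m = S m'" for S :: "'n mfps" using True by (simp add: xmul_def m'_def)
  have sm: "(\<Sum>l\<in>{1..k}. m l) = m i + (\<Sum>l\<in>R0. m l)" unfolding R0_def by (rule sum.remove[OF fin hi])
  have sm': "(\<Sum>l\<in>{1..k}. m' l) = (m i - j) + (\<Sum>l\<in>R0. m l)"
    unfolding R0_def sum.remove[OF fin hi] by (simp add: m'_def)
  have pm: "(\<Prod>l\<in>{1..k}. fact (m l)) = fact (m i) * (\<Prod>l\<in>R0. fact (m l) :: nat)" unfolding R0_def by (rule prod.remove[OF fin hi])
  have pm': "(\<Prod>l\<in>{1..k}. fact (m' l)) = fact (m i - j) * (\<Prod>l\<in>R0. fact (m l) :: nat)"
    unfolding R0_def prod.remove[OF fin hi] by (simp add: m'_def)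
  have a1: "mpoch A j ** mpoch (A + mat (of_nat j)) (\<Sum>l\<in>{1..k}. m' l) = mpoch A (\<Sum>l\<in>{1..k}. m l)"
    unfolding mpoch_add sm sm' using True by (simp add: add.assoc)
  have split: "[1..<k+1] = [1..<i] @ i # [Suc i..<k+1]" using hi1 by (rule upt_split)
  have o1: "oprod (\<lambda>l. mpoch ((B(i := X)) l) (m' l)) [1..<k+1] = oprod fB [1..<i] ** mpoch X (m i - j) ** oprod fB [Suc i..<k+1]"
  proof -
    have "oprod (\<lambda>l. mpoch ((B(i := X)) l) (m' l)) [1..<i] = oprod fB [1..<i]"
      by (rule oprod_cong) (auto simp: fB_def m'_def)
    moreover have "oprod (\<lambda>l. mpoch ((B(i := X)) l) (m' l)) [Suc i..<k+1] = oprod fB [Suc i..<k+1]"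
      by (rule oprod_cong) (auto simp: fB_def m'_def)
    ultimately show ?thesis unfolding split oprod_append oprod_Cons by (simp add: m'_def matrix_mul_assoc)
  qed
  have o2: "oprod (\<lambda>l. mpoch_inv ((C(i := C i + mat (of_nat j))) l) (m' l)) [1..<k+1]
     = oprod g [1..<i] ** mpoch_inv (C i + mat (of_nat j)) (m i - j) ** oprod g [Suc i..<k+1]"
  proof -
    have "oprod (\<lambda>l. mpoch_inv ((C(i := C i + mat (of_nat j))) l) (m' l)) [1..<i] = oprod g [1..<i]"
      by (rule oprod_cong) (auto simp: g_def m'_def)
    moreover have "oprod (\<lambda>l. mpoch_inv ((C(i := C i + mat (of_nat j))) l) (m' l)) [Suc i..<k+1] = oprod g [Suc i..<k+1]"
      by (rule oprod_cong) (auto simp: g_def m'_def)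
    ultimately show ?thesis unfolding split oprod_append oprod_Cons by (simp add: m'_def matrix_mul_assoc)
  qed
  have invCi: "invertible (mpoch (C i) q)" for q by (rule invertible_mpoch) (rule hC[OF hi])
  have invCi': "invertible (mpoch (C i + mat (of_nat j)) q)" for q
  proof (rule invertible_mpoch)
    fix l
    have e: "C i + mat (of_nat j) + mat (of_nat l) = C i + mat (of_nat (j + l))" by (simp add: mat_add add.assoc)
    show "invertible (C i + mat (of_nat j) + mat (of_nat l))" unfolding e by (rule hC[OF hi])
  qed
  have c2: "mpoch_inv (C i + mat (of_nat j)) (m i - j) ** mpoch_inv (C i) j = g i"
  proof -
    have "mpoch_inv (C i + mat (of_nat j)) (m i - j) ** mpoch_inv (C i) j
       = matrix_inv (mpoch (C i) j ** mpoch (C i + mat (of_nat j)) (m i - j))"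
      unfolding mpoch_inv_def by (rule matrix_inv_mult'[symmetric, OF invCi invCi'])
    also have "\<dots> = g i" unfolding mpoch_add g_def mpoch_inv_def using True by simp
    finally show ?thesis .
  qed
  have c1: "mpoch_inv (C i) j ** oprod g [Suc i..<k+1] = oprod g [Suc i..<k+1] ** mpoch_inv (C i) j"
  proof (rule oprod_comm)
    fix l assume "l \<in> set [Suc i..<k+1]"
    then have l: "l \<in> {1..k}" using hi1 by auto
    have invCl: "invertible (mpoch (C l) (m l))" by (rule invertible_mpoch) (rule hC[OF l])
    show "mpoch_inv (C i) j ** g l = g l ** mpoch_inv (C i) j"
      unfolding g_def mpoch_inv_def
      by (rule inv_comm[OF invCi invCl]) (rule mpoch_comm2[OF hCC[OF hi l]])
  qed
  have c1': "Z ** oprod g [Suc i..<k+1] ** mpoch_inv (C i) j = Z ** mpoch_inv (C i) j ** oprod g [Suc i..<k+1]" for Z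
    using c1 by (simp add: matrix_mul_assoc[symmetric])
  have c2': "Z ** mpoch_inv (C i + mat (of_nat j)) (m i - j) ** mpoch_inv (C i) j = Z ** g i" for Z
    using c2 by (simp add: matrix_mul_assoc[symmetric])
  have coef: "1 / real (\<Prod>l\<in>{1..k}. fact (m' l)) = (real (m i choose j) * fact j) / real (\<Prod>l\<in>{1..k}. fact (m l))"
  proof -
    have f: "real (fact (m i)) = fact j * fact (m i - j) * real (m i choose j)"
      using binomial_fact_lemma[OF True] by (metis of_nat_fact of_nat_mult)
    have pos: "real (m i choose j) > 0" using True by simp
    have G: "real (\<Prod>l\<in>R0. fact (m l) :: nat) > 0" by (simp add: prod_pos)
    show ?thesis unfolding pm pm' of_nat_mult f using pos G by (simp add: field_simps)
  qed
  have "mpoch A j ** xmul i j (FA k (A + mat (of_nat j)) (B(i := X)) (C(i := C i + mat (of_nat j)))) m ** mpoch_inv (C i) j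
     = (1 / real (\<Prod>l\<in>{1..k}. fact (m' l))) *\<^sub>R (mpoch A j ** (mpoch (A + mat (of_nat j)) (\<Sum>l\<in>{1..k}. m' l)
         ** oprod (\<lambda>l. mpoch ((B(i := X)) l) (m' l)) [1..<k+1]
         ** oprod (\<lambda>l. mpoch_inv ((C(i := C i + mat (of_nat j))) l) (m' l)) [1..<k+1]) ** mpoch_inv (C i) j)"
    by (simp only: xm FA_def mm_scaleR_left mm_scaleR_right)
  also have "\<dots> = (1 / real (\<Prod>l\<in>{1..k}. fact (m' l))) *\<^sub>R
     (mpoch A (\<Sum>l\<in>{1..k}. m l) ** oprod fB [1..<i] ** mpoch X (m i - j) ** oprod fB [Suc i..<k+1]
      ** oprod g [1..<i] ** g i ** oprod g [Suc i..<k+1])"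
    unfolding o1 o2 by (simp only: matrix_mul_assoc c1' c2' a1)
  finally show ?thesis unfolding coef fB_def g_def .
qed

lemma lhs_eq:
  fixes k i :: nat and A X :: "'n::finite M" and B C :: "nat \<Rightarrow> 'n M" and m :: "nat \<Rightarrow> nat"
  assumes hi: "i \<in> {1..k}"
  shows "FA k A (B(i := X)) C m
   = (1 / real (\<Prod>l\<in>{1..k}. fact (m l))) *\<^sub>R
     (mpoch A (\<Sum>l\<in>{1..k}. m l) ** oprod (\<lambda>l. mpoch (B l) (m l)) [1..<i] ** mpoch X (m i)
      ** oprod (\<lambda>l. mpoch (B l) (m l)) [Suc i..<k+1]
      ** oprod (\<lambda>l. mpoch_inv (C l) (m l)) [1..<i] ** mpoch_inv (C i) (m i)
      ** oprod (\<lambda>l. mpoch_inv (C l) (m l)) [Suc i..<k+1])"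
proof -
  have hi1: "1 \<le> i" "i \<le> k" using hi by auto
  have split: "[1..<k+1] = [1..<i] @ i # [Suc i..<k+1]" using hi1 by (rule upt_split)
  have "oprod (\<lambda>l. mpoch ((B(i := X)) l) (m l)) [1..<i] = oprod (\<lambda>l. mpoch (B l) (m l)) [1..<i]"
    by (rule oprod_cong) auto
  moreover have "oprod (\<lambda>l. mpoch ((B(i := X)) l) (m l)) [Suc i..<k+1] = oprod (\<lambda>l. mpoch (B l) (m l)) [Suc i..<k+1]"
    by (rule oprod_cong) auto
  ultimately show ?thesis unfolding FA_def split oprod_append oprod_Cons by (simp add: matrix_mul_assoc)
qed

lemma lin_comb:
  fixes P L R Q1 Q2 Q3 :: "'n::finite M"
  shows "(\<Sum>j\<in>S. a j *\<^sub>R (P ** L ** Y j ** R ** Q1 ** Q2 ** Q3)) = P ** L ** (\<Sum>j\<in>S. a j *\<^sub>R Y j) ** R ** Q1 ** Q2 ** Q3"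
  by (simp add: mm_sum_left mm_sum_right mm_scaleR_left mm_scaleR_right)

lemma combine:
  fixes P L R Q1 Q2 Q3 Y :: "'n::finite M"
  assumes "Y = (\<Sum>j\<in>S. (e j * c j) *\<^sub>R Yj j)"
  shows "(1 / F) *\<^sub>R (P ** L ** Y ** R ** Q1 ** Q2 ** Q3) = (\<Sum>j\<in>S. e j *\<^sub>R ((c j / F) *\<^sub>R (P ** L ** Yj j ** R ** Q1 ** Q2 ** Q3)))"
proof -
  have "(\<Sum>j\<in>S. e j *\<^sub>R ((c j / F) *\<^sub>R (P ** L ** Yj j ** R ** Q1 ** Q2 ** Q3)))
      = (\<Sum>j\<in>S. (e j * (c j / F)) *\<^sub>R (P ** L ** Yj j ** R ** Q1 ** Q2 ** Q3))" by simp
  also have "\<dots> = P ** L ** (\<Sum>j\<in>S. (e j * (c j / F)) *\<^sub>R Yj j) ** R ** Q1 ** Q2 ** Q3" by (rule lin_comb)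
  also have "(\<Sum>j\<in>S. (e j * (c j / F)) *\<^sub>R Yj j) = (1 / F) *\<^sub>R Y"
    unfolding assms scaleR_sum_right by (intro sum.cong refl) simp
  finally show ?thesis by (simp add: mm_scaleR_left mm_scaleR_right)
qed

theorem mainTheorem3:
  fixes k i n :: nat
    and A :: "'n::finite cmat"
    and B C :: "nat \<Rightarrow> 'n cmat"
  assumes "k \<ge> 1"
    and "\<And>j m. j \<in> {1..k} \<Longrightarrow> invertible (C j + mat (of_nat m))"
    and "\<And>j1 j2. j1 \<in> {1..k} \<Longrightarrow> j2 \<in> {1..k} \<Longrightarrow> C j1 ** C j2 = C j2 ** C j1"
    and "i \<in> {1..k}"
    and "n \<ge> 1"
    and "\<And>m. invertible (B i + mat (of_nat m))"
  shows "(\<forall>m. (\<forall>j. j \<notin> {1..k} \<longrightarrow> m j = 0) \<longrightarrow>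
            FA k A (B(i := B i + mat (of_nat n))) C m =
            (\<Sum>n1 = 0..n. of_nat (n choose n1) *\<^sub>R
               (mpoch A n1
                ** xmul i n1 (FA k (A + mat (of_nat n1)) (B(i := B i + mat (of_nat n1)))
                                  (C(i := C i + mat (of_nat n1)))) m
                ** mpoch_inv (C i) n1)))
       \<and> ((\<forall>n1. n1 \<le> n \<longrightarrow> invertible (B i - mat (of_nat n1))) \<longrightarrow>
          (\<forall>m. (\<forall>j. j \<notin> {1..k} \<longrightarrow> m j = 0) \<longrightarrow>
            FA k A (B(i := B i - mat (of_nat n))) C m =
            (\<Sum>n1 = 0..n. ((-1) ^ n1 * of_nat (n choose n1)) *\<^sub>R
               (mpoch A n1
                ** xmul i n1 (FA k (A + mat (of_nat n1)) B
                                  (C(i := C i + mat (of_nat n1)))) m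
                ** mpoch_inv (C i) n1))))"
proof (intro conjI allI impI)
  fix m :: "nat \<Rightarrow> nat"
  note te = term_eq[OF assms(4) assms(2) assms(3)]
  show "FA k A (B(i := B i + mat (of_nat n))) C m =
            (\<Sum>n1 = 0..n. of_nat (n choose n1) *\<^sub>R
               (mpoch A n1
                ** xmul i n1 (FA k (A + mat (of_nat n1)) (B(i := B i + mat (of_nat n1)))
                                  (C(i := C i + mat (of_nat n1)))) m
                ** mpoch_inv (C i) n1))"
    apply (subst te)
       apply assumption
      apply assumption
     apply assumption
    unfolding lhs_eq[OF assms(4)] atLeast0AtMost
    by (rule combine) (rule I1)
next
  fix m :: "nat \<Rightarrow> nat"
  note te = term_eq[where B = B and X = "B i", OF assms(4) assms(2) assms(3), unfolded fun_upd_triv]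
  show "FA k A (B(i := B i - mat (of_nat n))) C m =
            (\<Sum>n1 = 0..n. ((-1) ^ n1 * of_nat (n choose n1)) *\<^sub>R
               (mpoch A n1
                ** xmul i n1 (FA k (A + mat (of_nat n1)) B
                                  (C(i := C i + mat (of_nat n1)))) m
                ** mpoch_inv (C i) n1))"
    apply (subst te)
       apply assumption
      apply assumption
     apply assumption
    unfolding lhs_eq[OF assms(4)] atLeast0AtMost
    by (rule combine) (simp only: I2 mult.assoc)
qed

end
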